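(* Let $(M,J)$ be a closed almost complex manifold. If $J$ is $C^{\infty}$ full then both $\iota^{1,1}$ and $\iota^{(2,0),(0,2)}$ are surjective. Consequently, if $J$ is $C^{\infty}$ pure and full, then both $\iota^{1,1}$ and $\iota^{(2,0),(0,2)}$ are isomorphisms.
   Context: Real 2-forms split as $J$-invariant ($\alpha(Jv,Jw)=\alpha(v,w)$, the space $\Omega^{1,1}$) plus $J$-anti-invariant ($\alpha(Jv,Jw)=-\alpha(v,w)$, the space $\Omega^{(2,0),(0,2)}$), with projections $\pi^{1,1},\pi^{(2,0),(0,2)}$. $\mathbf Z,\mathbf B$ are the closed and exact real 2-forms; for $S=(1,1)$ or $(2,0),(0,2)$, $\mathbf Z^S=\mathbf Z\cap\Omega^S$, $\mathbf B^S=\mathbf B\cap\Omega^S$, and $\iota^{S}:\mathbf Z^S/\mathbf B^S\to\pi^S\mathbf Z/\pi^S\mathbf B$ is induced by inclusion. $H_J^{S}(M)_{\mathbb R}=\mathbf Z^S/\mathbf B^S$, viewed as a subspace of $H^2(M;\mathbb R)$. $J$ is $C^\infty$ pure if $H_J^{1,1}(M)_{\mathbb R}\cap H_J^{(2,0),(0,2)}(M)_{\mathbb R}=0$, and $C^\infty$ full if $H_J^{1,1}(M)_{\mathbb R}+H_J^{(2,0),(0,2)}(M)_{\mathbb R}=H^2(M;\mathbb R)$. *)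

theory Defs
  imports Main "HOL.Real_Vector_Spaces"
begin

text \<open>Abstract model: 'b = real 2-forms, 'a = real 1-forms, 'c = real 3-forms on M.
  d1 : 1-forms \<rightarrow> 2-forms and d2 : 2-forms \<rightarrow> 3-forms are the exterior derivatives,
  sig is the action of J on 2-forms, sig alpha (v,w) = alpha (Jv, Jw).\<close>

definition Omega11 :: "('b::real_vector \<Rightarrow> 'b) \<Rightarrow> 'b set" where
  "Omega11 sig = {\<alpha>. sig \<alpha> = \<alpha>}"

definition Omega2002 :: "('b::real_vector \<Rightarrow> 'b) \<Rightarrow> 'b set" where
  "Omega2002 sig = {\<alpha>. sig \<alpha> = - \<alpha>}"

definition pi11 :: "('b::real_vector \<Rightarrow> 'b) \<Rightarrow> 'b \<Rightarrow> 'b" where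
  "pi11 sig \<alpha> = scaleR (1/2) (\<alpha> + sig \<alpha>)"

definition pi2002 :: "('b::real_vector \<Rightarrow> 'b) \<Rightarrow> 'b \<Rightarrow> 'b" where
  "pi2002 sig \<alpha> = scaleR (1/2) (\<alpha> - sig \<alpha>)"

definition closedZ :: "('b::real_vector \<Rightarrow> 'c::real_vector) \<Rightarrow> 'b set" where
  "closedZ d2 = {\<alpha>. d2 \<alpha> = 0}"

definition exactB :: "('a::real_vector \<Rightarrow> 'b::real_vector) \<Rightarrow> 'b set" where
  "exactB d1 = range d1"

text \<open>iota^S : Z^S/B^S \<rightarrow> pi^S Z / pi^S B, [w] \<mapsto> [w]; surjectivity and injectivity.\<close>
definition iota_surj :: "('b::real_vector \<Rightarrow> 'b) \<Rightarrow> 'b set \<Rightarrow> 'b set \<Rightarrow> 'b set \<Rightarrow> bool" where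
  "iota_surj p OS Z B \<longleftrightarrow> (\<forall>y\<in>p ` Z. \<exists>w\<in>Z \<inter> OS. y - w \<in> p ` B)"

definition iota_inj :: "('b::real_vector \<Rightarrow> 'b) \<Rightarrow> 'b set \<Rightarrow> 'b set \<Rightarrow> 'b set \<Rightarrow> bool" where
  "iota_inj p OS Z B \<longleftrightarrow> (\<forall>w\<in>Z \<inter> OS. w \<in> p ` B \<longrightarrow> w \<in> B \<inter> OS)"

definition iota_iso :: "('b::real_vector \<Rightarrow> 'b) \<Rightarrow> 'b set \<Rightarrow> 'b set \<Rightarrow> 'b set \<Rightarrow> bool" where
  "iota_iso p OS Z B \<longleftrightarrow> iota_surj p OS Z B \<and> iota_inj p OS Z B"

text \<open>C^\<infinity> pure: H^{1,1} \<inter> H^{(2,0),(0,2)} = 0 inside H^2 = Z/B.\<close>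
definition Cinf_pure :: "('b::real_vector \<Rightarrow> 'b) \<Rightarrow> 'b set \<Rightarrow> 'b set \<Rightarrow> bool" where
  "Cinf_pure sig Z B \<longleftrightarrow>
     (\<forall>a\<in>Z \<inter> Omega11 sig. \<forall>b\<in>Z \<inter> Omega2002 sig. a - b \<in> B \<longrightarrow> a \<in> B)"

text \<open>C^\<infinity> full: H^{1,1} + H^{(2,0),(0,2)} = H^2.\<close>
definition Cinf_full :: "('b::real_vector \<Rightarrow> 'b) \<Rightarrow> 'b set \<Rightarrow> 'b set \<Rightarrow> bool" where
  "Cinf_full sig Z B \<longleftrightarrow>
     (\<forall>z\<in>Z. \<exists>a\<in>Z \<inter> Omega11 sig. \<exists>b\<in>Z \<inter> Omega2002 sig. z - a - b \<in> B)"

end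

theory Submission
  imports Defs
begin

theorem lemma2p11:
  fixes d1 :: "'a::real_vector \<Rightarrow> 'b::real_vector"
    and d2 :: "'b \<Rightarrow> 'c::real_vector"
    and sig :: "'b \<Rightarrow> 'b"
  assumes "linear d1" and "linear d2" and "linear sig"
    and "\<And>\<alpha>. sig (sig \<alpha>) = \<alpha>"
    and "\<And>\<beta>. d2 (d1 \<beta>) = 0"
  shows "(Cinf_full sig (closedZ d2) (exactB d1) \<longrightarrow>
            iota_surj (pi11 sig) (Omega11 sig) (closedZ d2) (exactB d1) \<and>
            iota_surj (pi2002 sig) (Omega2002 sig) (closedZ d2) (exactB d1))
       \<and> (Cinf_pure sig (closedZ d2) (exactB d1) \<and> Cinf_full sig (closedZ d2) (exactB d1) \<longrightarrow>
            iota_iso (pi11 sig) (Omega11 sig) (closedZ d2) (exactB d1) \<and>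
            iota_iso (pi2002 sig) (Omega2002 sig) (closedZ d2) (exactB d1))"
proof -
  note l1 = assms(1) and l2 = assms(2) and ls = assms(3) and inv = assms(4) and dd = assms(5)
  have sadd: "sig (x + y) = sig x + sig y" for x y using ls by (rule linear_add)
  have sdiff: "sig (x - y) = sig x - sig y" for x y using ls by (rule linear_diff)
  have sneg: "sig (- x) = - sig x" for x using ls by (rule linear_neg)
  have sscale: "sig (c *\<^sub>R x) = c *\<^sub>R sig x" for c x using ls by (rule linear_scale)
  have dadd: "d2 (x + y) = d2 x + d2 y" for x y using l2 by (rule linear_add)
  have ddiff: "d2 (x - y) = d2 x - d2 y" for x y using l2 by (rule linear_diff)
  have dneg: "d2 (- x) = - d2 x" for x using l2 by (rule linear_neg)
  have 1: "d1 (x - y) = d1 x - d1 y" for x y using l1 by (rule linear_diff)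
  have dec: "x = pi11 sig x + pi2002 sig x" for x
  proof -
    have "pi11 sig x + pi2002 sig x = (1/2) *\<^sub>R ((x + sig x) + (x - sig x))"
      unfolding pi11_def pi2002_def by (simp only: scaleR_right_distrib)
    also have "(x + sig x) + (x - sig x) = (2::real) *\<^sub>R x" by (simp add: scaleR_2)
    finally have "pi11 sig x + pi2002 sig x = (1/2) *\<^sub>R ((2::real) *\<^sub>R x)" .
    thus ?thesis by (metis scaleR_scaleR scaleR_one divide_self_if zero_neq_numeral times_divide_eq_left mult_1)
  qed
  have p11O: "pi11 sig x \<in> Omega11 sig" for x
    unfolding pi11_def Omega11_def by (simp add: sscale sadd inv add.commute)
  have p20O: "pi2002 sig x \<in> Omega2002 sig" for x
    unfolding pi2002_def Omega2002_def by (simp add: sscale sdiff inv algebra_simps)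
  have p11a: "a \<in> Omega11 sig \<Longrightarrow> pi11 sig a = a" for a
    unfolding pi11_def Omega11_def by (simp add: scaleR_add_right[symmetric] del: scaleR_add_right)
  have p11b: "b \<in> Omega2002 sig \<Longrightarrow> pi11 sig b = 0" for b
    unfolding pi11_def Omega2002_def by simp
  have p20a: "a \<in> Omega11 sig \<Longrightarrow> pi2002 sig a = 0" for a
    unfolding pi2002_def Omega11_def by simp
  have p20b: "b \<in> Omega2002 sig \<Longrightarrow> pi2002 sig b = b" for b
    unfolding pi2002_def Omega2002_def by (simp add: scaleR_add_right[symmetric] del: scaleR_add_right)
  have lp11: "pi11 sig (x + y) = pi11 sig x + pi11 sig y" for x y
    unfolding pi11_def by (simp add: sadd algebra_simps)
  have lp20: "pi2002 sig (x + y) = pi2002 sig x + pi2002 sig y" for x y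
    unfolding pi2002_def by (simp add: sadd algebra_simps)
  let ?Z = "closedZ d2" and ?B = "exactB d1"
  have surj: "iota_surj (pi11 sig) (Omega11 sig) ?Z ?B \<and> iota_surj (pi2002 sig) (Omega2002 sig) ?Z ?B"
    if F: "Cinf_full sig ?Z ?B"
  proof
    show "iota_surj (pi11 sig) (Omega11 sig) ?Z ?B"
      unfolding iota_surj_def
    proof
      fix y assume "y \<in> pi11 sig ` ?Z"
      then obtain z where z: "z \<in> ?Z" "y = pi11 sig z" by blast
      from F z obtain a b where a: "a \<in> ?Z \<inter> Omega11 sig" and b: "b \<in> ?Z \<inter> Omega2002 sig"
        and e: "z - a - b \<in> ?B" unfolding Cinf_full_def by blast
      have "z = a + b + (z - a - b)" by simp
      hence "pi11 sig z = a + pi11 sig (z - a - b)"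
        by (metis lp11 p11a p11b a b IntD2 add_0_right)
      thus "\<exists>w\<in>?Z \<inter> Omega11 sig. y - w \<in> pi11 sig ` ?B" using a e z by force
    qed
    show "iota_surj (pi2002 sig) (Omega2002 sig) ?Z ?B"
      unfolding iota_surj_def
    proof
      fix y assume "y \<in> pi2002 sig ` ?Z"
      then obtain z where z: "z \<in> ?Z" "y = pi2002 sig z" by blast
      from F z obtain a b where a: "a \<in> ?Z \<inter> Omega11 sig" and b: "b \<in> ?Z \<inter> Omega2002 sig"
        and e: "z - a - b \<in> ?B" unfolding Cinf_full_def by blast
      have "z = a + b + (z - a - b)" by simp
      hence "pi2002 sig z = b + pi2002 sig (z - a - b)"
        by (metis lp20 p20a p20b a b IntD2 add_0_left)
      thus "\<exists>w\<in>?Z \<inter> Omega2002 sig. y - w \<in> pi2002 sig ` ?B" using b e z by force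
    qed
  qed
  have inj: "iota_inj (pi11 sig) (Omega11 sig) ?Z ?B \<and> iota_inj (pi2002 sig) (Omega2002 sig) ?Z ?B"
    if P: "Cinf_pure sig ?Z ?B"
  proof
    show "iota_inj (pi11 sig) (Omega11 sig) ?Z ?B"
      unfolding iota_inj_def
    proof (intro ballI impI)
      fix w assume w: "w \<in> ?Z \<inter> Omega11 sig" and "w \<in> pi11 sig ` ?B"
      then obtain c where c: "w = pi11 sig (d1 c)" unfolding exactB_def by blast
      define u where "u = pi2002 sig (d1 c)"
      have wu: "d1 c = w + u" using dec c u_def by metis
      have "u = d1 c - w" using wu by (simp add: algebra_simps)
      hence "d2 u = d2 (d1 c) - d2 w" using ddiff by simp
      hence "d2 u = 0" using w dd[of c] by (simp add: closedZ_def)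
      hence "- u \<in> ?Z \<inter> Omega2002 sig" using p20O[of "d1 c"] u_def
        by (simp add: closedZ_def dneg Omega2002_def sneg)
      moreover have "w - (- u) \<in> ?B" using wu unfolding exactB_def by (metis diff_minus_eq_add rangeI)
      ultimately have "w \<in> ?B" using P w unfolding Cinf_pure_def by blast
      thus "w \<in> ?B \<inter> Omega11 sig" using w by blast
    qed
    show "iota_inj (pi2002 sig) (Omega2002 sig) ?Z ?B"
      unfolding iota_inj_def
    proof (intro ballI impI)
      fix w assume w: "w \<in> ?Z \<inter> Omega2002 sig" and "w \<in> pi2002 sig ` ?B"
      then obtain c where c: "w = pi2002 sig (d1 c)" unfolding exactB_def by blast
      define a where "a = pi11 sig (d1 c)"
      have wu: "d1 c = a + w" using dec c a_def by metis
      have "a = d1 c - w" using wu by (simp add: algebra_simps)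
      hence "d2 a = d2 (d1 c) - d2 w" using ddiff by simp
      hence "d2 a = 0" using w dd[of c] by (simp add: closedZ_def)
      hence "a \<in> ?Z \<inter> Omega11 sig" using p11O[of "d1 c"] a_def
        by (simp add: closedZ_def)
      moreover have "- w \<in> ?Z \<inter> Omega2002 sig" using w
        by (simp add: closedZ_def dneg Omega2002_def sneg)
      moreover have "a - (- w) \<in> ?B" using wu unfolding exactB_def by (metis diff_minus_eq_add rangeI)
      ultimately have "a \<in> ?B" using P unfolding Cinf_pure_def by blast
      then obtain e where e: "a = d1 e" unfolding exactB_def by blast
      have "w = d1 (c - e)" using wu e 1 by simp
      thus "w \<in> ?B \<inter> Omega2002 sig" using w by (auto simp: exactB_def)
    qed
  qed
  show ?thesis unfolding iota_iso_def using surj inj by blast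
qed

end
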